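(* In the setting below, $v_2(N)+c_2\le v_2(M)$.
   Context: $A$ is an abelian variety of dimension $g\ge1$ over a number field $K$, with $K$ large enough that all abelian subvarieties of $A_{\bar K}$ and homomorphisms between them are defined over $K$; $G_K=\mathrm{Gal}(\bar K/K)$, $A[l]$ is the $l$-torsion, $K_l=K(A[l])$, $K_{\mathrm{tors}}=K(A_{\mathrm{tors}})$, $[k]$ is multiplication by $k$, $K_Y$ is the field of definition of a subvariety $Y$. The integer $c=c(A)\ge1$ is fixed such that for any two coprime positive integers $l,k$ there is $\sigma\in G_K$ with $\sigma|_{A[l]}=[k^c]$ (Serre). $v_2$ is the 2-adic valuation and $c_2=v_2(c)$. Let $V\subset A$ be irreducible and not a torsion coset, $\mathrm{Stab}(V)=\{P:P+V=V\}$, $\varphi_V:A\to B$ a surjective homomorphism defined over $K$ onto an abelian subvariety $B$ with kernel $\mathrm{Stab}(V)$, $X=\varphi_V(V)$, and assume $K_X\subset K_{\mathrm{tors}}$. Let $M\ge1$ be the smallest integer with $K_X\subset K_M$ and $v_2(M)\ge c_2+2$. For $P\in A[M]$ let $\mathcal N(P)=\{\alpha\in\mathbb Z:\alpha>-v_2(M),\ \exists\sigma\in G_K,\ \sigma|_{A[M]}=[(1+2^{\alpha}M)^c]\text{ and }\sigma|_{K_{X+P}}=\mathrm{Id}\}$ (this contains all $\alpha\ge0$), let $\beta(P)$ be the largest integer not in $\mathcal N(P)$, $\beta=\min_{P\in A[M]}\beta(P)$, and $N=2^{\beta+1}M$. *)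

theory Defs
  imports Complex_Main "HOL-Algebra.Group" "HOL-Computational_Algebra.Primes"
begin

text \<open>The points of A over the algebraic closure form an abelian group of type 'a;
  G (the absolute Galois group G_K) acts on them by group automorphisms via act.\<close>

definition mult_int :: "int \<Rightarrow> 'a::ab_group_add \<Rightarrow> 'a" where
  "mult_int k x = (if 0 \<le> k then (\<Sum>i<nat k. x) else - (\<Sum>i<nat (- k). x))"

definition tors :: "int \<Rightarrow> 'a::ab_group_add set" where
  "tors n = {P. mult_int n P = 0}"

definition v2q :: "rat \<Rightarrow> int" where
  "v2q q = (THE e. \<exists>a b. odd a \<and> odd b \<and> q = of_int a / of_int b * 2 powi e)"

text \<open>The integer 2^alpha * M (alpha may be negative, with alpha > - v_2(M)).\<close>
definition twopow_mul :: "int \<Rightarrow> nat \<Rightarrow> int" where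
  "twopow_mul \<alpha> M = (if 0 \<le> \<alpha> then 2 ^ nat \<alpha> * int M else int M div 2 ^ nat (- \<alpha>))"

text \<open>The set N(P); H P is the subgroup Gal(Kbar / K_{X+P}) of G.\<close>
definition Nset :: "('g, 'b) monoid_scheme \<Rightarrow> ('g \<Rightarrow> 'a::ab_group_add \<Rightarrow> 'a)
    \<Rightarrow> ('a \<Rightarrow> 'g set) \<Rightarrow> nat \<Rightarrow> nat \<Rightarrow> 'a \<Rightarrow> int set" where
  "Nset G act H c M P = {\<alpha>. - int (multiplicity 2 M) < \<alpha> \<and>
     (\<exists>\<sigma>\<in>carrier G. (\<forall>Q\<in>tors (int M). act \<sigma> Q = mult_int ((1 + twopow_mul \<alpha> M) ^ c) Q)
                    \<and> \<sigma> \<in> H P)}"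

definition beta_P :: "('g, 'b) monoid_scheme \<Rightarrow> ('g \<Rightarrow> 'a::ab_group_add \<Rightarrow> 'a)
    \<Rightarrow> ('a \<Rightarrow> 'g set) \<Rightarrow> nat \<Rightarrow> nat \<Rightarrow> 'a \<Rightarrow> int" where
  "beta_P G act H c M P = (GREATEST \<alpha>. \<alpha> \<notin> Nset G act H c M P)"

definition beta :: "('g, 'b) monoid_scheme \<Rightarrow> ('g \<Rightarrow> 'a::ab_group_add \<Rightarrow> 'a)
    \<Rightarrow> ('a \<Rightarrow> 'g set) \<Rightarrow> nat \<Rightarrow> nat \<Rightarrow> int" where
  "beta G act H c M = Min (beta_P G act H c M ` tors (int M))"

definition Nnum :: "('g, 'b) monoid_scheme \<Rightarrow> ('g \<Rightarrow> 'a::ab_group_add \<Rightarrow> 'a)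
    \<Rightarrow> ('a \<Rightarrow> 'g set) \<Rightarrow> nat \<Rightarrow> nat \<Rightarrow> rat" where
  "Nnum G act H c M = 2 powi (beta G act H c M + 1) * of_nat M"

text \<open>Elements of G acting trivially on A[n], i.e. Gal(Kbar / K_n).\<close>
definition fixing :: "('g, 'b) monoid_scheme \<Rightarrow> ('g \<Rightarrow> 'a::ab_group_add \<Rightarrow> 'a) \<Rightarrow> nat \<Rightarrow> 'g set" where
  "fixing G act n = {\<sigma>\<in>carrier G. \<forall>Q\<in>tors (int n). act \<sigma> Q = Q}"

end

theory Submission
  imports Defs
begin

lemma odd_pow_eq:
  fixes a b :: int and e e' :: int
  assumes "odd a" "odd b" "of_int a * (2::rat) powi e = of_int b * 2 powi e'"
  shows "e \<le> e'"
proof (rule ccontr)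
  assume "\<not> e \<le> e'"
  define k where "k = nat (e - e')"
  have k1: "k \<ge> 1" and ek: "e = e' + int k" using \<open>\<not> e \<le> e'\<close> unfolding k_def by auto
  have "(2::rat) powi e = 2 powi e' * 2 powi (int k)"
    unfolding ek by (rule power_int_add) simp
  also have "(2::rat) powi (int k) = 2 ^ k" by (rule power_int_of_nat)
  finally have p: "(2::rat) powi e = 2 powi e' * 2 ^ k" .
  have nz: "(2::rat) powi e' \<noteq> 0" by simp
  from assms(3) have "(of_int a * 2 ^ k) * (2::rat) powi e' = of_int b * 2 powi e'"
    unfolding p by (simp only: mult_ac)
  then have "of_int a * 2 ^ k = (of_int b :: rat)" using nz by (rule mult_right_cancel[THEN iffD1, rotated])
  then have "(of_int (a * 2 ^ k) :: rat) = of_int b" by simp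
  then have ab: "a * 2 ^ k = b" by (simp only: of_int_eq_iff)
  obtain j where "k = Suc j" using k1 by (cases k) auto
  then have "b = 2 * (a * 2 ^ j)" using ab by simp
  then have "even b" by simp
  then show False using assms(2) by simp
qed


lemma v2q_eq:
  fixes u :: int assumes "odd u"
  shows "v2q (of_int u * 2 powi e) = e"
  unfolding v2q_def
proof (rule the_equality)
  show "\<exists>a b. odd a \<and> odd b \<and> of_int u * 2 powi e = of_int a / of_int b * (2::rat) powi e"
    using assms by (intro exI[of _ u] exI[of _ 1]) simp
next
  fix e' assume "\<exists>a b. odd a \<and> odd b \<and> of_int u * 2 powi e = of_int a / of_int b * (2::rat) powi e'"
  then obtain a b where ab: "odd a" "odd b" "of_int u * 2 powi e = of_int a / of_int b * (2::rat) powi e'" by blast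
  have b0: "(of_int b :: rat) \<noteq> 0" using ab(2) by (metis even_zero of_int_eq_0_iff)
  from ab(3) have "of_int u * 2 powi e * of_int b = of_int a / of_int b * (2::rat) powi e' * of_int b"
    by simp
  also have "\<dots> = of_int a * (2::rat) powi e'" using b0 by simp
  finally have eq1: "of_int u * 2 powi e * of_int b = of_int a * (2::rat) powi e'" .
  then have eq2: "of_int (u*b) * (2::rat) powi e = of_int a * 2 powi e'"
    by (simp only: of_int_mult mult_ac)
  have ub: "odd (u*b)" using assms ab by simp
  have "e \<le> e'" by (rule odd_pow_eq[OF ub ab(1) eq2])
  moreover have "e' \<le> e" by (rule odd_pow_eq[OF ab(1) ub eq2[symmetric]])
  ultimately show "e' = e" by simp
qed

lemma sum_const_add:
  fixes Q :: "'a::ab_group_add" and m n :: nat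
  shows "(\<Sum>i<m + n. Q) = (\<Sum>i<m. Q) + (\<Sum>i<n. Q)"
  by (induction n) (simp_all add: algebra_simps)

lemma sum_const_mult_zero:
  fixes Q :: "'a::ab_group_add" and n t :: nat
  assumes "(\<Sum>i<n. Q) = 0"
  shows "(\<Sum>i<n * t. Q) = 0"
proof (induction t)
  case 0 then show ?case by simp
next
  case (Suc t)
  have "n * Suc t = n + n * t" by simp
  then show ?case using Suc assms by (simp only: sum_const_add) simp
qed

lemma mult_int_cong_one:
  fixes Q :: "'a::ab_group_add" and n :: nat and k :: int
  assumes Q: "Q \<in> tors (int n)" and n: "0 < n" and k: "1 \<le> k" and dv: "int n dvd k - 1"
  shows "mult_int k Q = Q"
proof -
  obtain t where t: "k - 1 = int n * t" using dv by (auto elim: dvdE)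
  have "t \<ge> 0" using t k n by (metis diff_ge_0_iff_ge zero_le_mult_iff of_nat_0_less_iff not_le)
  then have "k = int (1 + n * nat t)" using t by simp
  then have nk: "nat k = 1 + n * nat t" by (simp only: nat_int)
  have Q0: "(\<Sum>i<n. Q) = 0" using Q by (simp add: tors_def mult_int_def)
  have "mult_int k Q = (\<Sum>i<1 + n * nat t. Q)" using k by (simp add: mult_int_def nk)
  also have "\<dots> = Q" by (simp only: sum_const_add sum_const_mult_zero[OF Q0]) simp
  finally show ?thesis .
qed

lemma sq_step:
  fixes z D :: int
  assumes "even D" "D dvd z"
  shows "2 * D dvd (1 + z) ^ 2 - 1"
proof -
  obtain w where w: "z = D * w" using assms(2) by (auto elim: dvdE)
  obtain h where h: "D = 2 * h" using assms(1) by (auto elim: evenE)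
  have "(1 + z) ^ 2 - 1 = 2 * D * (w + h * w * w)"
    unfolding w h by (simp add: power2_eq_square algebra_simps)
  then show ?thesis by simp
qed

lemma pow2_iter:
  fixes y d :: int
  assumes "even d" "d dvd y"
  shows "2 ^ j * d dvd (1 + y) ^ (2 ^ j) - 1"
proof (induction j)
  case 0 then show ?case using assms by simp
next
  case (Suc j)
  obtain z where z: "(1 + y) ^ (2 ^ j) - 1 = z" by simp
  have z1: "(1 + y) ^ (2 ^ j) = 1 + z" using z by simp
  have "(1 + y) ^ (2 ^ Suc j) = ((1 + y) ^ (2 ^ j)) ^ 2"
    by (simp add: power_mult[symmetric] mult.commute)
  then have e: "(1 + y) ^ (2 ^ Suc j) = (1 + z) ^ 2" using z1 by simp
  have "even (2 ^ j * d)" using assms(1) by simp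
  moreover have "2 ^ j * d dvd z" using Suc z by simp
  ultimately have "2 * (2 ^ j * d) dvd (1 + z) ^ 2 - 1" by (rule sq_step)
  then show ?case using e by (simp add: mult.assoc)
qed

lemma pow_c_cong:
  fixes y d :: int and c u j :: nat
  assumes "even d" "d dvd y" "c = 2 ^ j * u"
  shows "2 ^ j * d dvd (1 + y) ^ c - 1"
proof -
  let ?m = "2 ^ j * d"
  have "?m dvd (1 + y) ^ (2 ^ j) - 1" by (rule pow2_iter[OF assms(1,2)])
  then have "(1 + y) ^ (2 ^ j) mod ?m = 1 mod ?m" by (simp add: mod_eq_dvd_iff)
  then have "((1 + y) ^ (2 ^ j)) ^ u mod ?m = 1 ^ u mod ?m" by (metis power_mod)
  then have "(1 + y) ^ c mod ?m = 1 mod ?m" using assms(3) by (simp add: power_mult)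
  then show ?thesis by (simp add: mod_eq_dvd_iff)
qed

theorem lemma3p4:
  fixes G :: "('g, 'b) monoid_scheme" and act :: "'g \<Rightarrow> 'a::ab_group_add \<Rightarrow> 'a"
    and H :: "'a \<Rightarrow> 'g set" and c M :: nat
  assumes grp: "group G"
    and act_one: "\<And>Q. act \<one>\<^bsub>G\<^esub> Q = Q"
    and act_mult: "\<And>\<sigma> \<tau> Q. \<sigma> \<in> carrier G \<Longrightarrow> \<tau> \<in> carrier G \<Longrightarrow>
                      act (\<sigma> \<otimes>\<^bsub>G\<^esub> \<tau>) Q = act \<sigma> (act \<tau> Q)"
    and act_add: "\<And>\<sigma> P Q. \<sigma> \<in> carrier G \<Longrightarrow> act \<sigma> (P + Q) = act \<sigma> P + act \<sigma> Q"
    and fin_tors: "\<And>n. 1 \<le> n \<Longrightarrow> finite (tors n :: 'a set)"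
    and c_pos: "1 \<le> c"
    and serre: "\<And>l k. 0 < l \<Longrightarrow> 0 < k \<Longrightarrow> coprime l k \<Longrightarrow>
                 \<exists>\<sigma>\<in>carrier G. \<forall>Q\<in>tors (int l). act \<sigma> Q = mult_int (int k ^ c) Q"
    and H_sub: "\<And>P. P \<in> tors (int M) \<Longrightarrow> subgroup (H P) G"
    and M_pos: "1 \<le> M"
    and M_KX: "fixing G act M \<subseteq> H 0"
    and M_v2: "multiplicity 2 M \<ge> multiplicity 2 c + 2"
    and M_min: "\<And>M'. 1 \<le> M' \<Longrightarrow> fixing G act M' \<subseteq> H 0 \<Longrightarrow>
                 multiplicity 2 M' \<ge> multiplicity 2 c + 2 \<Longrightarrow> M \<le> M'"
  shows "v2q (Nnum G act H c M) + int (multiplicity 2 c) \<le> int (multiplicity 2 M)"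
proof -
  define m where "m = multiplicity 2 M"
  define c2 where "c2 = multiplicity 2 c"
  have Mne: "M \<noteq> 0" using M_pos by simp
  obtain w where Mw: "M = 2 ^ m * w" and wodd: "\<not> 2 dvd w"
    using multiplicity_decompose'[of M 2] Mne unfolding m_def by auto
  obtain u where cu: "c = 2 ^ c2 * u" using multiplicity_dvd[of 2 c] unfolding c2_def by (auto elim: dvdE)
  have mc: "c2 + 2 \<le> m" using M_v2 unfolding m_def c2_def by simp
  have "(2::nat) ^ (c2 + 2) dvd M" using multiplicity_dvd'[of "c2 + 2" 2 M] mc unfolding m_def by simp
  then obtain e where "M = 2 ^ (c2 + 2) * e" by (auto elim: dvdE)
  then have Me: "M = 2 ^ c2 * (4 * e)" by (simp add: power_add)
  define d where "d = int (4 * e)"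
  have dev: "even d" unfolding d_def by simp
  have Md: "int M = 2 ^ c2 * d" unfolding d_def using Me by simp
  have key: "d dvd twopow_mul \<alpha> M \<and> 0 \<le> twopow_mul \<alpha> M" if "- int c2 \<le> \<alpha>" for \<alpha>
  proof (cases "0 \<le> \<alpha>")
    case True
    then have "twopow_mul \<alpha> M = d * (2 ^ nat \<alpha> * 2 ^ c2)" unfolding twopow_mul_def Md by simp
    moreover have "0 \<le> d" unfolding d_def by simp
    ultimately show ?thesis by simp
  next
    case False
    define r where "r = nat (- \<alpha>)"
    have rc: "r \<le> c2" using that False unfolding r_def by simp
    have "int M = 2 ^ r * (2 ^ (c2 - r) * d)" unfolding Md using rc
      by (simp add: power_add[symmetric])
    then have "twopow_mul \<alpha> M = 2 ^ (c2 - r) * d" unfolding twopow_mul_def using False r_def by simp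
    moreover have "0 \<le> d" unfolding d_def by simp
    ultimately show ?thesis by simp
  qed
  have inN: "\<alpha> \<in> Nset G act H c M P" if P: "P \<in> tors (int M)" and a: "- int c2 \<le> \<alpha>" for P \<alpha>
  proof -
    have lt: "- int (multiplicity 2 M) < \<alpha>" using a mc unfolding m_def by simp
    have one_c: "\<one>\<^bsub>G\<^esub> \<in> carrier G" using grp by (simp add: group.is_monoid monoid.one_closed)
    have one_H: "\<one>\<^bsub>G\<^esub> \<in> H P" using H_sub[OF P] by (rule subgroup.one_closed)
    define y where "y = twopow_mul \<alpha> M"
    have ky: "d dvd y" "0 \<le> y" using key[OF a] unfolding y_def by auto
    have act1: "act \<one>\<^bsub>G\<^esub> Q = mult_int ((1 + twopow_mul \<alpha> M) ^ c) Q" if Q: "Q \<in> tors (int M)" for Q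
    proof -
      have k1: "1 \<le> (1 + y) ^ c" using ky(2) by simp
      have "2 ^ c2 * d dvd (1 + y) ^ c - 1" by (rule pow_c_cong[OF dev ky(1) cu])
      then have dv: "int M dvd (1 + y) ^ c - 1" using Md by simp
      have "mult_int ((1 + y) ^ c) Q = Q" by (rule mult_int_cong_one[OF Q _ k1 dv]) (use M_pos in simp)
      then show ?thesis using act_one y_def by simp
    qed
    show ?thesis unfolding Nset_def using lt one_c one_H act1 by blast
  qed
  have bP: "beta_P G act H c M P \<le> - int c2 - 1" if P: "P \<in> tors (int M)" for P
  proof -
    define S where "S = {\<alpha>. \<alpha> \<notin> Nset G act H c M P}"
    have Sb: "\<alpha> \<le> - int c2 - 1" if "\<alpha> \<in> S" for \<alpha>
      using that inN[OF P, of \<alpha>] unfolding S_def by force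
    have lo: "- int m \<in> S" unfolding S_def Nset_def m_def by simp
    define T where "T = S \<inter> {- int m .. - int c2 - 1}"
    have Tf: "finite T" unfolding T_def by simp
    have loT: "- int m \<in> T" unfolding T_def using lo mc by simp
    define g where "g = Max T"
    have gT: "g \<in> T" unfolding g_def using Tf loT by (intro Max_in) auto
    have gS: "g \<in> S" and gle: "g \<le> - int c2 - 1" using gT unfolding T_def by auto
    have ge: "\<alpha> \<le> g" if "\<alpha> \<in> S" for \<alpha>
    proof (cases "- int m \<le> \<alpha>")
      case True
      then have "\<alpha> \<in> T" unfolding T_def using that Sb[OF that] by simp
      then show ?thesis unfolding g_def using Tf by simp
    next
      case False
      have "- int m \<le> g" unfolding g_def using Tf loT by simp
      then show ?thesis using False by simp
    qed
    have "beta_P G act H c M P = g" unfolding beta_P_def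
      by (rule Greatest_equality) (use gS ge in \<open>auto simp: S_def\<close>)
    then show ?thesis using gle by simp
  qed
  have z: "0 \<in> tors (int M)" by (simp add: tors_def mult_int_def)
  have fin: "finite (tors (int M) :: 'a set)" using fin_tors M_pos by simp
  have "beta G act H c M \<le> beta_P G act H c M 0" unfolding beta_def
    using fin z by (intro Min_le) auto
  then have bb: "beta G act H c M \<le> - int c2 - 1" using bP[OF z] by simp
  define b where "b = beta G act H c M"
  have "Nnum G act H c M = 2 powi (b + 1) * (2 ^ m * of_nat w)"
    unfolding Nnum_def b_def by (subst Mw) simp
  also have "(2::rat) ^ m = 2 powi int m" by (simp add: power_int_of_nat)
  also have "2 powi (b + 1) * (2 powi int m * of_nat w) = of_int (int w) * (2::rat) powi (b + 1 + int m)"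
    by (simp add: power_int_add)
  finally have "v2q (Nnum G act H c M) = b + 1 + int m"
    using v2q_eq[of "int w" "b + 1 + int m"] wodd by simp
  then show ?thesis using bb unfolding b_def m_def c2_def by simp
qed

end
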